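(* Let $\alpha\in(0,1)$ and let $0=t_0<t_1<t_2<\cdots$ be time levels with $\tau_k=t_k-t_{k-1}$, $r_k:=\tau_k/\tau_{k-1}$ ($k\ge2$), such that $r_k<r^*(\alpha)$ for all $k\ge2$. For a real sequence $(v^k)_{k\ge0}$ and $n\ge2$ set $$J^n_{B2}:=\Big(\frac{1}{2-\alpha}a^{(n)}_0+\frac{r_n\eta^{(n)}_0}{1+r_n}\Big)\nabla_\tau v^n-\frac{r_n^2\eta^{(n)}_0}{1+r_n}\nabla_\tau v^{n-1}.$$ Then for $n\ge2$, $$(\nabla_\tau v^n)J^n_{B2}\ge\frac{\alpha r_{n+1}^{2-\alpha/2}}{2(1+r_{n+1})\tau_n^\alpha}\frac{(\nabla_\tau v^n)^2}{\Gamma(3-\alpha)}-\frac{\alpha r_n^{2-\alpha/2}}{2(1+r_n)\tau_{n-1}^\alpha}\frac{(\nabla_\tau v^{n-1})^2}{\Gamma(3-\alpha)}+\frac{\mathrm{g}(r_n,r_{n+1},\alpha)}{2\Gamma(3-\alpha)\tau_n^\alpha}(\nabla_\tau v^n)^2.$$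
   Context: $\nabla_\tau v^k:=v^k-v^{k-1}$; $\omega_\beta(t):=t^{\beta-1}/\Gamma(\beta)$; $a^{(n)}_0:=\frac1{\tau_n}\int_{t_{n-1}}^{t_n}\omega_{1-\alpha}(t_n-s)\,ds$ and $\eta^{(n)}_0:=\frac{2}{\tau_n}\int_{t_{n-1}}^{t_n}\frac{s-t_{n-1/2}}{\tau_n}\omega_{1-\alpha}(t_n-s)\,ds$ with $t_{n-1/2}=(t_n+t_{n-1})/2$. $\mathrm{g}(x,y,\alpha):=\frac{2+2(1+\alpha)x-\alpha x^{2-\alpha/2}}{1+x}-\frac{\alpha y^{2-\alpha/2}}{1+y}$; $r^*(\alpha)$ is the unique positive root $z$ of $1/\alpha+(1+1/\alpha)z-z^{2-\alpha/2}=0$. *)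

theory Defs
  imports "HOL-Analysis.Analysis"
begin

definition nabla :: "(nat \<Rightarrow> real) \<Rightarrow> nat \<Rightarrow> real" where
  "nabla v k = v k - v (k - 1)"

definition omega :: "real \<Rightarrow> real \<Rightarrow> real" where
  "omega \<beta> s = s powr (\<beta> - 1) / Gamma \<beta>"

definition tau :: "(nat \<Rightarrow> real) \<Rightarrow> nat \<Rightarrow> real" where
  "tau t k = t k - t (k - 1)"

definition ratio :: "(nat \<Rightarrow> real) \<Rightarrow> nat \<Rightarrow> real" where
  "ratio t k = tau t k / tau t (k - 1)"

definition a0 :: "real \<Rightarrow> (nat \<Rightarrow> real) \<Rightarrow> nat \<Rightarrow> real" where
  "a0 \<alpha> t n = (1 / tau t n) *
     integral {t (n - 1)..t n} (\<lambda>s. omega (1 - \<alpha>) (t n - s))"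

definition eta0 :: "real \<Rightarrow> (nat \<Rightarrow> real) \<Rightarrow> nat \<Rightarrow> real" where
  "eta0 \<alpha> t n = (2 / tau t n) *
     integral {t (n - 1)..t n}
       (\<lambda>s. (s - (t n + t (n - 1)) / 2) / tau t n * omega (1 - \<alpha>) (t n - s))"

definition gfun :: "real \<Rightarrow> real \<Rightarrow> real \<Rightarrow> real" where
  "gfun x y \<alpha> = (2 + 2 * (1 + \<alpha>) * x - \<alpha> * x powr (2 - \<alpha> / 2)) / (1 + x)
                 - \<alpha> * y powr (2 - \<alpha> / 2) / (1 + y)"

definition rstar :: "real \<Rightarrow> real" where
  "rstar \<alpha> = (THE z. z > 0 \<and> 1 / \<alpha> + (1 + 1 / \<alpha>) * z - z powr (2 - \<alpha> / 2) = 0)"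

definition JB2 :: "real \<Rightarrow> (nat \<Rightarrow> real) \<Rightarrow> (nat \<Rightarrow> real) \<Rightarrow> nat \<Rightarrow> real" where
  "JB2 \<alpha> t v n =
     (a0 \<alpha> t n / (2 - \<alpha>) + ratio t n * eta0 \<alpha> t n / (1 + ratio t n)) * nabla v n
     - (ratio t n)^2 * eta0 \<alpha> t n / (1 + ratio t n) * nabla v (n - 1)"

end

theory Submission imports Defs begin

lemma dpow:
  fixes T1 b x :: real
  assumes "x < T1"
  shows "((\<lambda>s. (T1 - s) powr b) has_real_derivative - (b * (T1 - x) powr (b - 1))) (at x)"
  using assms by (auto intro!: derivative_eq_intros)

lemma int1:
  fixes T0 T1 a :: real
  assumes "T0 < T1" "0 < a" "a < 1"
  shows "((\<lambda>s. (T1 - s) powr (-a)) has_integral (T1 - T0) powr (1 - a) / (1 - a)) {T0..T1}"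
proof -
  define c where "c = - 1 / (1 - a)"
  let ?F = "\<lambda>s. c * (T1 - s) powr (1 - a)"
  have "((\<lambda>s. (T1 - s) powr (-a)) has_integral (?F T1 - ?F T0)) {T0..T1}"
  proof (rule fundamental_theorem_of_calculus_interior)
    show "continuous_on {T0..T1} ?F"
      using assms by (auto intro!: continuous_intros continuous_on_powr')
    fix x assume x: "x \<in> {T0<..<T1}"
    have d: "(?F has_real_derivative c * (- ((1 - a) * (T1 - x) powr (1 - a - 1)))) (at x)"
      using x by (intro DERIV_cmult dpow) auto
    have "c * (- ((1 - a) * (T1 - x) powr (1 - a - 1))) = (T1 - x) powr (-a)"
      using assms by (simp add: c_def)
    with d show "(?F has_vector_derivative (T1 - x) powr (-a)) (at x)"
      by (simp add: has_real_derivative_iff_has_vector_derivative)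
  qed (use assms in auto)
  then show ?thesis using assms by (simp add: c_def)
qed

lemma int2:
  fixes T0 T1 a :: real
  assumes "T0 < T1" "0 < a" "a < 1"
  shows "((\<lambda>s. ((T1 - T0)/2 - (T1 - s)) * (T1 - s) powr (-a)) has_integral
     (T1 - T0)/2 * (T1 - T0) powr (1 - a) / (1 - a) - (T1 - T0) powr (2 - a) / (2 - a)) {T0..T1}"
proof -
  define c1 where "c1 = - (T1 - T0) / (2 * (1 - a))"
  define c2 where "c2 = 1 / (2 - a)"
  let ?F = "\<lambda>s. c1 * (T1 - s) powr (1 - a) + c2 * (T1 - s) powr (2 - a)"
  have "((\<lambda>s. ((T1 - T0)/2 - (T1 - s)) * (T1 - s) powr (-a)) has_integral (?F T1 - ?F T0)) {T0..T1}"
  proof (rule fundamental_theorem_of_calculus_interior)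
    show "continuous_on {T0..T1} ?F"
      using assms by (auto intro!: continuous_intros continuous_on_powr')
    fix x assume x: "x \<in> {T0<..<T1}"
    have d: "(?F has_real_derivative (c1 * (- ((1 - a) * (T1 - x) powr (1 - a - 1)))
        + c2 * (- ((2 - a) * (T1 - x) powr (2 - a - 1))))) (at x)"
      using x by (intro DERIV_add DERIV_cmult dpow) auto
    have e: "(T1 - x) powr (1 - a) = (T1 - x) * (T1 - x) powr (-a)"
    proof -
      have "(T1 - x) powr (1 - a) = (T1 - x) powr (1 + (-a))" by simp
      also have "\<dots> = (T1 - x) powr 1 * (T1 - x) powr (-a)" by (rule powr_add)
      finally show ?thesis using x by simp
    qed
    have "c1 * (- ((1 - a) * (T1 - x) powr (1 - a - 1)))
        + c2 * (- ((2 - a) * (T1 - x) powr (2 - a - 1))) = ((T1 - T0)/2 - (T1 - x)) * (T1 - x) powr (-a)"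
    proof -
      have h1: "c1 * (1 - a) = - (T1 - T0) / 2" using assms by (simp add: c1_def field_simps)
      have h2: "c2 * (2 - a) = 1" using assms by (simp add: c2_def)
      have "c1 * (- ((1 - a) * (T1 - x) powr (1 - a - 1)))
        + c2 * (- ((2 - a) * (T1 - x) powr (2 - a - 1))) =
        - (c1 * (1 - a)) * (T1 - x) powr (-a) - (c2 * (2 - a)) * ((T1 - x) * (T1 - x) powr (-a))"
        by (simp add: e algebra_simps)
      also have "\<dots> = ((T1 - T0)/2 - (T1 - x)) * (T1 - x) powr (-a)"
        unfolding h1 h2 by (simp add: field_simps)
      finally show ?thesis .
    qed
    with d show "(?F has_vector_derivative ((T1 - T0)/2 - (T1 - x)) * (T1 - x) powr (-a)) (at x)"
      by (simp add: has_real_derivative_iff_has_vector_derivative)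
  qed (use assms in auto)
  moreover have "?F T1 - ?F T0 = (T1 - T0)/2 * (T1 - T0) powr (1 - a) / (1 - a) - (T1 - T0) powr (2 - a) / (2 - a)"
    using assms by (simp add: c1_def c2_def, simp add: divide_simps, simp add: algebra_simps)
  ultimately show ?thesis by simp
qed

lemma alg:
  fixes a b r r' R' q P G3 al s s' :: real
  assumes "r > 0" "r' > 0" "q > 0" "P > 0" "G3 > 0" "al > 0" and hs: "s = 1 + r" and hs': "s' = 1 + r'"
  shows "a * ((P / G3) * ((1 + al * r / s) * a - al * r^2 / s * b)) \<ge>
     al * R' / (2 * s' * (1 / P)) * a^2 / G3
   - al * (r^2 / q) / (2 * s * ((1/P) / q^2)) * b^2 / G3
   + ((2 + 2 * (1 + al) * r - al * (r^2 / q)) / s - al * R' / s') / (2 * G3 * (1 / P)) * a^2"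
proof -
  have nz: "s \<noteq> 0" "s' \<noteq> 0" "q \<noteq> 0" "P \<noteq> 0" "G3 \<noteq> 0"
    using assms by auto
  have eq: "a * ((P / G3) * ((1 + al * r / s) * a - al * r^2 / s * b)) - (
     al * R' / (2 * s' * (1 / P)) * a^2 / G3
   - al * (r^2 / q) / (2 * s * ((1/P) / q^2)) * b^2 / G3
   + ((2 + 2 * (1 + al) * r - al * (r^2 / q)) / s - al * R' / s') / (2 * G3 * (1 / P)) * a^2)
   = (P / G3) * al * r^2 / (2 * q * s) * (a - q * b)^2"
    using nz by (simp add: field_simps power2_eq_square, simp add: hs algebra_simps)
  have "(P / G3) * al * r^2 / (2 * q * s) * (a - q * b)^2 \<ge> 0"
    using assms by (intro mult_nonneg_nonneg divide_nonneg_pos) auto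
  with eq show ?thesis by linarith
qed

lemma eta_alg:
  fixes x y h G P al :: real
  assumes "x \<noteq> 0" "y \<noteq> 0" "h \<noteq> 0" "G \<noteq> 0" "y - 2 * x = al"
  shows "(2 / h) * ((h / 2 * (h * P) / x - h ^ 2 * P / y) / (h * G)) = al * P / (y * x * G)"
  using assms by (simp add: field_simps power2_eq_square flip: assms(5))

lemma J_alg:
  fixes P G r al x y s :: real
  assumes "s \<noteq> 0" "G \<noteq> 0"
  shows "(P / G + r * (al * P / G) / s) * x - r^2 * (al * P / G) / s * y
    = (P / G) * ((1 + al * r / s) * x - al * r^2 / s * y)"
  using assms by (simp add: field_simps)

theorem lemma2p2:
  fixes \<alpha> :: real and t v :: "nat \<Rightarrow> real" and n :: nat
  assumes "0 < \<alpha>" "\<alpha> < 1"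
    and "t 0 = 0" and "strict_mono t"
    and "\<And>k. k \<ge> 2 \<Longrightarrow> ratio t k < rstar \<alpha>"
    and "n \<ge> 2"
  shows "nabla v n * JB2 \<alpha> t v n \<ge>
      \<alpha> * ratio t (n + 1) powr (2 - \<alpha> / 2) / (2 * (1 + ratio t (n + 1)) * tau t n powr \<alpha>)
        * (nabla v n)^2 / Gamma (3 - \<alpha>)
    - \<alpha> * ratio t n powr (2 - \<alpha> / 2) / (2 * (1 + ratio t n) * tau t (n - 1) powr \<alpha>)
        * (nabla v (n - 1))^2 / Gamma (3 - \<alpha>)
    + gfun (ratio t n) (ratio t (n + 1)) \<alpha> / (2 * Gamma (3 - \<alpha>) * tau t n powr \<alpha>) * (nabla v n)^2"
proof -
  have taupos: "tau t k > 0" if "k \<ge> 1" for k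
    using that assms(4) unfolding tau_def by (simp add: strict_mono_less)
  have h: "tau t n > 0" and h1: "tau t (n - 1) > 0" and h2: "tau t (n + 1) > 0"
    using taupos assms(6) by auto
  have r: "ratio t n > 0" and r2: "ratio t (n + 1) > 0"
    using h h1 h2 unfolding ratio_def by auto
  define P where "P = tau t n powr (- \<alpha>)"
  define q where "q = ratio t n powr (\<alpha> / 2)"
  define G1 where "G1 = Gamma (1 - \<alpha>)"
  have P: "P > 0" using h by (simp add: P_def)
  have q: "q > 0" using r by (simp add: q_def)
  have nz: "1 - \<alpha> \<notin> \<int>\<^sub>\<le>\<^sub>0" "2 - \<alpha> \<notin> \<int>\<^sub>\<le>\<^sub>0"
    using assms(1,2) by (auto elim!: nonpos_Ints_cases)
  have G2: "Gamma (2 - \<alpha>) = (1 - \<alpha>) * G1"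
    using Gamma_plus1[OF nz(1)] by (simp add: G1_def)
  have G3: "Gamma (3 - \<alpha>) = (2 - \<alpha>) * (1 - \<alpha>) * G1"
    using Gamma_plus1[OF nz(2)] G2 by (simp add: G1_def)
  have G1p: "G1 > 0" using assms(1,2) by (simp add: G1_def Gamma_real_pos)
  have G3p: "Gamma (3 - \<alpha>) > 0" using G3 G1p assms(1,2) by simp
  have T01: "t (n - 1) < t n" using h by (simp add: tau_def)
  have htau: "tau t n = t n - t (n - 1)" by (simp add: tau_def)
  have e1: "tau t n powr (1 - \<alpha>) = tau t n * P"
  proof -
    have "tau t n powr (1 - \<alpha>) = tau t n powr (1 + (-\<alpha>))" by simp
    also have "\<dots> = tau t n powr 1 * tau t n powr (-\<alpha>)" by (rule powr_add)
    finally show ?thesis using h by (simp add: P_def)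
  qed
  have e2: "tau t n powr (2 - \<alpha>) = tau t n ^ 2 * P"
  proof -
    have "tau t n powr (2 - \<alpha>) = tau t n powr (2 + (-\<alpha>))" by simp
    also have "\<dots> = tau t n powr 2 * tau t n powr (-\<alpha>)" by (rule powr_add)
    finally show ?thesis using h by (simp add: P_def)
  qed
  have e3: "tau t n powr \<alpha> = 1 / P"
    using h by (simp add: P_def powr_minus divide_simps)
  have om: "omega (1 - \<alpha>) x = x powr (- \<alpha>) / G1" for x
    by (simp add: omega_def G1_def)
  have ia: "integral {t (n - 1)..t n} (\<lambda>s. omega (1 - \<alpha>) (t n - s)) = tau t n * P / (1 - \<alpha>) / G1"
    unfolding om
    using has_integral_divide[OF int1[OF T01 assms(1,2)], of G1] htau e1
    by (intro integral_unique) simp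
  have a0: "a0 \<alpha> t n / (2 - \<alpha>) = P / Gamma (3 - \<alpha>)"
    unfolding a0_def ia G3 using h assms(1,2) G1p by (simp add: field_simps)
  have ie: "integral {t (n - 1)..t n}
       (\<lambda>s. (s - (t n + t (n - 1)) / 2) / tau t n * omega (1 - \<alpha>) (t n - s))
     = (tau t n / 2 * (tau t n * P) / (1 - \<alpha>) - tau t n ^ 2 * P / (2 - \<alpha>)) / (tau t n * G1)"
  proof (intro integral_unique)
    have "((\<lambda>s. ((t n - t (n - 1))/2 - (t n - s)) * (t n - s) powr (-\<alpha>) / (tau t n * G1)) has_integral
      (tau t n / 2 * (tau t n * P) / (1 - \<alpha>) - tau t n ^ 2 * P / (2 - \<alpha>)) / (tau t n * G1)) {t (n - 1)..t n}"
      using has_integral_divide[OF int2[OF T01 assms(1,2)], of "tau t n * G1"] e1 e2 htau by simp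
    moreover have "((t n - t (n - 1))/2 - (t n - s)) * (t n - s) powr (-\<alpha>) / (tau t n * G1)
       = (s - (t n + t (n - 1)) / 2) / tau t n * omega (1 - \<alpha>) (t n - s)" for s
      unfolding om by (simp add: field_simps)
    ultimately show "((\<lambda>s. (s - (t n + t (n - 1)) / 2) / tau t n * omega (1 - \<alpha>) (t n - s)) has_integral
      (tau t n / 2 * (tau t n * P) / (1 - \<alpha>) - tau t n ^ 2 * P / (2 - \<alpha>)) / (tau t n * G1)) {t (n - 1)..t n}"
      by simp
  qed
  have eta: "eta0 \<alpha> t n = \<alpha> * P / Gamma (3 - \<alpha>)"
    unfolding eta0_def ie G3 using h assms(1,2) G1p by (intro eta_alg) auto
  have J: "JB2 \<alpha> t v n = (P / Gamma (3 - \<alpha>)) * ((1 + \<alpha> * ratio t n / (1 + ratio t n)) * nabla v n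
      - \<alpha> * (ratio t n)^2 / (1 + ratio t n) * nabla v (n - 1))"
    unfolding JB2_def a0 eta using r G3p by (intro J_alg) auto
  have tn1: "tau t (n - 1) = tau t n / ratio t n" using h1 h by (simp add: ratio_def)
  have f1: "tau t (n - 1) powr \<alpha> = (1 / P) / q^2"
    unfolding tn1 q_def e3[symmetric] using h r
    by (simp add: powr_divide powr_add[symmetric] power2_eq_square)
  have f2: "ratio t n powr (2 - \<alpha> / 2) = (ratio t n)^2 / q"
    unfolding q_def using r by (simp add: powr_diff)
  show ?thesis
    unfolding J gfun_def e3 f1 f2
    by (rule alg[OF r r2 q P G3p assms(1) refl refl])
qed
end
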